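(* Let $T$ be a minimal tree with $n$ vertices. (i) Every vertex of $T$ other than the root is either a leaf or has at least two children (i.e., no non-root vertex has degree $2$). (ii) If $n\ge 8$, then the root of $T$ has exactly two children.
   Context: A rooted tree $T$ is a finite tree with a distinguished vertex, its root; its order $|T|$ is its number of vertices. For vertices $u,v$, the infimum of $u$ and $v$ is the vertex common to the path from $u$ to the root and the path from $v$ to the root that is furthest from the root. A set $X\subseteq V(T)$ is infima closed if the infimum of any two elements of $X$ lies in $X$. $I(T)$ denotes the number of nonempty infima closed subsets of $V(T)$. For $n\ge1$, $m_n=\min\{I(T): T \text{ a rooted tree with } n \text{ vertices}\}$; a rooted tree $T$ with $I(T)=m_{|T|}$ is called minimal. *)

theory Defs
  imports Main
begin

text \<open>Rooted trees as rose trees; a vertex is identified with its position,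
  i.e. the list of child indices on the path from the root. The root is [].\<close>

datatype rtree = Node "rtree list"

fun kids :: "rtree \<Rightarrow> rtree list" where
  "kids (Node ts) = ts"

fun sub :: "rtree \<Rightarrow> nat list \<Rightarrow> rtree option" where
  "sub t [] = Some t"
| "sub (Node ts) (i # p) = (if i < length ts then sub (ts ! i) p else None)"

definition verts :: "rtree \<Rightarrow> nat list set" where
  "verts T = {p. sub T p \<noteq> None}"

definition order :: "rtree \<Rightarrow> nat" where
  "order T = card (verts T)"

definition nchildren :: "rtree \<Rightarrow> nat list \<Rightarrow> nat" where
  "nchildren T p = length (kids (the (sub T p)))"

text \<open>Infimum of two vertices: the deepest common ancestor, i.e. the longest
  common prefix of their positions.\<close>
fun infimum :: "nat list \<Rightarrow> nat list \<Rightarrow> nat list" where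
  "infimum (x # xs) (y # ys) = (if x = y then x # infimum xs ys else [])"
| "infimum _ _ = []"

definition infima_closed :: "rtree \<Rightarrow> nat list set \<Rightarrow> bool" where
  "infima_closed T X \<longleftrightarrow> X \<subseteq> verts T \<and> (\<forall>u\<in>X. \<forall>v\<in>X. infimum u v \<in> X)"

definition I :: "rtree \<Rightarrow> nat" where
  "I T = card {X. X \<noteq> {} \<and> infima_closed T X}"

definition m :: "nat \<Rightarrow> nat" where
  "m n = Min {I T | T. order T = n}"

definition minimal :: "rtree \<Rightarrow> bool" where
  "minimal T \<longleftrightarrow> I T = m (order T)"

end

theory Submission
  imports Defs "HOL-Library.FuncSet" "HOL-Library.Multiset"
begin

fun sz :: "rtree \<Rightarrow> nat" where "sz (Node ts) = Suc (sum_list (map sz ts))"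
fun val :: "rtree \<Rightarrow> nat" where
 "val (Node ts) = prod_list (map (\<lambda>t. Suc (val t)) ts) + sum_list (map val ts)"

lemma verts_Node: "verts (Node ts) = insert [] (\<Union>i<length ts. (#) i ` verts (ts!i))"
proof -
  have "p \<in> verts (Node ts) \<longleftrightarrow> p \<in> insert [] (\<Union>i<length ts. (#) i ` verts (ts!i))" for p
    by (cases p) (auto simp: verts_def)
  then show ?thesis by blast
qed

lemma finite_verts: "finite (verts T)"
  by (induction T) (auto simp: verts_Node)

lemma order_sz: "order T = sz T"
proof (induction T)
  case (Node ts)
  have fin: "finite ((#) i ` verts (ts!i))" for i by (simp add: finite_verts)
  have "card (\<Union>i<length ts. (#) i ` verts (ts!i)) = (\<Sum>i<length ts. card ((#) i ` verts (ts!i)))"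
    by (rule card_UN_disjoint) (auto simp: fin)
  also have "\<dots> = (\<Sum>i<length ts. sz (ts!i))"
    using Node by (auto simp: card_image order_def intro!: sum.cong)
  also have "\<dots> = sum_list (map sz ts)"
    by (simp add: sum_list_sum_nth atLeast0LessThan)
  finally show ?case
    by (simp add: order_def verts_Node card_insert_if finite_verts) blast
qed

definition ICS :: "rtree \<Rightarrow> nat list set set" where
  "ICS T = {X. infima_closed T X}"

lemma finite_ICS: "finite (ICS T)"
proof -
  have "ICS T \<subseteq> Pow (verts T)" by (auto simp: ICS_def infima_closed_def)
  then show ?thesis using finite_verts by (meson finite_Pow_iff finite_subset)
qed

lemma inf_same[simp]: "infimum (i # p) (i # q) = i # infimum p q" by simp
lemma inf_diff: "i \<noteq> j \<Longrightarrow> infimum (i # p) (j # q) = []" by simp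
lemma inf_nil1[simp]: "infimum [] q = []" by simp
lemma inf_nil2[simp]: "infimum p [] = []" by (cases p) auto

lemma cons_in_verts: "i # p \<in> verts (Node ts) \<longleftrightarrow> i < length ts \<and> p \<in> verts (ts!i)"
  by (auto simp: verts_def)

lemma ics_sub: "X \<in> ICS (Node ts) \<Longrightarrow> i < length ts \<Longrightarrow> {p. i # p \<in> X} \<in> ICS (ts!i)"
  unfolding ICS_def infima_closed_def
  by (auto simp: cons_in_verts) (metis inf_same)

lemma ics_elem: "X \<in> ICS (Node ts) \<Longrightarrow> p \<in> X \<Longrightarrow> p = [] \<or> (\<exists>i q. p = i # q \<and> i < length ts)"
  unfolding ICS_def infima_closed_def by (cases p) (auto simp: cons_in_verts)

lemma card_A: "card {X \<in> ICS (Node ts). [] \<in> X} = (\<Prod>i<length ts. card (ICS (ts!i)))"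
proof -
  define k where "k = length ts"
  define f where "f X = (\<lambda>i\<in>{..<k}. {p. i # p \<in> X})" for X :: "nat list set"
  define g where "g F = insert [] (\<Union>i<k. (#) i ` F i)" for F :: "nat \<Rightarrow> nat list set"
  have "bij_betw f {X \<in> ICS (Node ts). [] \<in> X} (PiE {..<k} (\<lambda>i. ICS (ts!i)))"
  proof (rule bij_betw_byWitness[where f'=g])
    show "\<forall>a\<in>{X \<in> ICS (Node ts). [] \<in> X}. g (f a) = a"
    proof
      fix X assume X: "X \<in> {X \<in> ICS (Node ts). [] \<in> X}"
      show "g (f X) = X"
      proof
        show "g (f X) \<subseteq> X" using X by (auto simp: g_def f_def)
        show "X \<subseteq> g (f X)"
        proof
          fix p assume "p \<in> X"
          with X ics_elem[of X ts p] show "p \<in> g (f X)" by (auto simp: g_def f_def k_def)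
        qed
      qed
    qed
    show "\<forall>a'\<in>PiE {..<k} (\<lambda>i. ICS (ts!i)). f (g a') = a'"
    proof
      fix F assume F: "F \<in> PiE {..<k} (\<lambda>i. ICS (ts!i))"
      show "f (g F) = F"
      proof
        fix i show "f (g F) i = F i"
          using F by (auto simp: f_def g_def PiE_def extensional_def)
      qed
    qed
    show "f ` {X \<in> ICS (Node ts). [] \<in> X} \<subseteq> PiE {..<k} (\<lambda>i. ICS (ts!i))"
      using ics_sub by (auto simp: f_def k_def)
    show "g ` PiE {..<k} (\<lambda>i. ICS (ts!i)) \<subseteq> {X \<in> ICS (Node ts). [] \<in> X}"
    proof
      fix X assume "X \<in> g ` PiE {..<k} (\<lambda>i. ICS (ts!i))"
      then obtain F where F: "F \<in> PiE {..<k} (\<lambda>i. ICS (ts!i))" and X: "X = g F" by auto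
      have Fi: "i < k \<Longrightarrow> F i \<subseteq> verts (ts!i) \<and> (\<forall>u\<in>F i. \<forall>v\<in>F i. infimum u v \<in> F i)" for i
        using F by (auto simp: ICS_def infima_closed_def)
      have "X \<subseteq> verts (Node ts)"
        using Fi unfolding X g_def verts_Node k_def by blast
      moreover have "\<forall>u\<in>X. \<forall>v\<in>X. infimum u v \<in> X"
      proof (intro ballI)
        fix u v assume "u \<in> X" "v \<in> X"
        then show "infimum u v \<in> X"
          unfolding X g_def using Fi by (auto simp: inf_diff) blast
      qed
      ultimately show "X \<in> {X \<in> ICS (Node ts). [] \<in> X}"
        by (auto simp: ICS_def infima_closed_def X g_def)
    qed
  qed
  then have "card {X \<in> ICS (Node ts). [] \<in> X} = card (PiE {..<k} (\<lambda>i. ICS (ts!i)))"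
    by (rule bij_betw_same_card)
  also have "\<dots> = (\<Prod>i<k. card (ICS (ts!i)))" by (simp add: card_PiE)
  finally show ?thesis by (simp add: k_def)
qed

lemma empty_ICS: "{} \<in> ICS T" by (simp add: ICS_def infima_closed_def)

lemma B_eq: "{X \<in> ICS (Node ts). [] \<notin> X \<and> X \<noteq> {}}
   = (\<Union>i<length ts. ((`) ((#) i)) ` (ICS (ts!i) - {{}}))" (is "?B = ?U")
proof
  show "?B \<subseteq> ?U"
  proof
    fix X assume XB: "X \<in> ?B"
    then obtain p0 where p0: "p0 \<in> X" by auto
    with XB ics_elem[of X ts p0] obtain i q where iq: "p0 = i # q" "i < length ts" by auto
    have all: "\<exists>r. p = i # r" if "p \<in> X" for p
    proof -
      from XB that ics_elem[of X ts p] obtain j r where "p = j # r" by auto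
      moreover have "j = i"
      proof (rule ccontr)
        assume "j \<noteq> i"
        then have "infimum p0 p = []" using iq \<open>p = j # r\<close> by simp
        moreover have "infimum p0 p \<in> X" using XB p0 that by (auto simp: ICS_def infima_closed_def)
        ultimately show False using XB by auto
      qed
      ultimately show ?thesis by auto
    qed
    have "X = (#) i ` {p. i # p \<in> X}" using all by auto
    moreover have "{p. i # p \<in> X} \<in> ICS (ts!i) - {{}}"
      using ics_sub[of X ts i] XB iq p0 by auto
    ultimately show "X \<in> ?U" using iq by blast
  qed
  show "?U \<subseteq> ?B"
  proof
    fix X assume "X \<in> ?U"
    then obtain i Y where i: "i < length ts" and Y: "Y \<in> ICS (ts!i)" "Y \<noteq> {}" and X: "X = (#) i ` Y" by auto
    have "X \<subseteq> verts (Node ts)" using Y i by (auto simp: X ICS_def infima_closed_def cons_in_verts)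
    moreover have "\<forall>u\<in>X. \<forall>v\<in>X. infimum u v \<in> X" using Y by (auto simp: X ICS_def infima_closed_def)
    ultimately show "X \<in> ?B" using Y by (auto simp: X ICS_def infima_closed_def)
  qed
qed

lemma card_B: "card {X \<in> ICS (Node ts). [] \<notin> X \<and> X \<noteq> {}} = (\<Sum>i<length ts. card (ICS (ts!i)) - 1)"
proof -
  have fin: "finite (((`) ((#) i)) ` (ICS (ts!i) - {{}}))" for i by (simp add: finite_ICS)
  have "card (\<Union>i<length ts. ((`) ((#) i)) ` (ICS (ts!i) - {{}})) = (\<Sum>i<length ts. card (((`) ((#) i)) ` (ICS (ts!i) - {{}})))"
    by (rule card_UN_disjoint) (auto simp: fin)
  also have "\<dots> = (\<Sum>i<length ts. card (ICS (ts!i)) - 1)"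
  proof (rule sum.cong)
    fix i
    have "inj_on ((`) ((#) i)) (ICS (ts!i) - {{}})"
      by (rule inj_onI) (simp add: inj_image_eq_iff)
    then show "card (((`) ((#) i)) ` (ICS (ts!i) - {{}})) = card (ICS (ts!i)) - 1"
      by (simp add: card_image finite_ICS empty_ICS)
  qed simp
  finally show ?thesis by (simp add: B_eq)
qed

lemma prod_list_nth: "prod_list (map f xs) = (\<Prod>i<length xs. f (xs!i))"
proof (induction xs rule: rev_induct)
  case (snoc x xs)
  have "(\<Prod>i<length (xs @ [x]). f ((xs @ [x])!i)) = (\<Prod>i<length xs. f ((xs @ [x])!i)) * f x"
    by (simp add: nth_append)
  also have "(\<Prod>i<length xs. f ((xs @ [x])!i)) = (\<Prod>i<length xs. f (xs!i))"
    by (rule prod.cong) (auto simp: nth_append)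
  finally show ?case using snoc by simp
qed simp

lemma card_ICS: "card (ICS T) = Suc (val T)"
proof (induction T)
  case (Node ts)
  let ?A = "{X \<in> ICS (Node ts). [] \<in> X}" and ?B = "{X \<in> ICS (Node ts). [] \<notin> X \<and> X \<noteq> {}}"
  have eq: "ICS (Node ts) = insert {} (?A \<union> ?B)" using empty_ICS by blast
  have fA: "finite ?A" and fB: "finite ?B" using finite_ICS by auto
  have n: "{} \<notin> ?A \<union> ?B" by blast
  have "card (ICS (Node ts)) = card (insert {} (?A \<union> ?B))"
    by (rule arg_cong[OF eq])
  also have "\<dots> = Suc (card (?A \<union> ?B))"
    using fA fB n by (simp add: card_insert_if del: Un_iff)
  also have "card (?A \<union> ?B) = card ?A + card ?B"
    using fA fB by (intro card_Un_disjoint) blast+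
  also have "card ?A = (\<Prod>i<length ts. Suc (val (ts!i)))"
    by (simp add: card_A Node nth_mem)
  also have "\<dots> = prod_list (map (\<lambda>t. Suc (val t)) ts)"
    by (simp add: prod_list_nth)
  also have "card ?B = (\<Sum>i<length ts. val (ts!i))"
    by (simp add: card_B Node nth_mem)
  also have "\<dots> = sum_list (map val ts)"
    by (simp add: sum_list_sum_nth atLeast0LessThan)
  finally show ?case by simp
qed

lemma I_val: "I T = val T"
proof -
  have "{X. X \<noteq> {} \<and> infima_closed T X} = ICS T - {{}}" by (auto simp: ICS_def)
  then show ?thesis by (simp add: I_def card_ICS finite_ICS empty_ICS)
qed

lemma I_bound: "I T \<le> 2 ^ order T"
proof -
  have "{X. X \<noteq> {} \<and> infima_closed T X} \<subseteq> Pow (verts T)" by (auto simp: infima_closed_def)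
  then have "I T \<le> card (Pow (verts T))" unfolding I_def by (intro card_mono) (auto simp: finite_verts)
  then show ?thesis by (simp add: card_Pow order_def finite_verts)
qed

lemma minimal_le: assumes "minimal T" "sz T' = sz T" shows "val T \<le> val T'"
proof -
  let ?S = "{I T | T. order T = order T'}"
  have "?S \<subseteq> {..2 ^ order T'}" using I_bound by (auto, metis)
  then have "finite ?S" by (rule finite_subset) simp
  moreover have "I T' \<in> ?S" by auto
  ultimately have "Min ?S \<le> I T'" by (rule Min_le)
  moreover have "order T = order T'" using assms(2) by (simp add: order_sz)
  ultimately show ?thesis using assms(1) by (simp add: minimal_def m_def I_val)
qed



abbreviation F where "F xs \<equiv> prod_list (map (\<lambda>t. Suc (val t)) xs)"
abbreviation SS where "SS xs \<equiv> sum_list (map val xs)"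

lemma F_pos: "F xs \<ge> 1"
  by (induction xs) auto

lemma val_pos: "val t \<ge> 1"
proof (cases t)
  case (Node ts)
  have "1 \<le> F ts" by (rule F_pos)
  then show ?thesis using Node by simp
qed

lemma F_ge_S: "F xs \<ge> Suc (SS xs)"
proof (induction xs)
  case (Cons x xs)
  have "Suc (SS (x # xs)) = val x + Suc (SS xs)" by simp
  also have "\<dots> \<le> Suc (val x) * Suc (SS xs)" by (simp add: algebra_simps)
  also have "\<dots> \<le> Suc (val x) * F xs" using Cons by (rule mult_le_mono2)
  finally show ?case by simp
qed simp

lemma val_nonleaf: "ts \<noteq> [] \<Longrightarrow> val (Node ts) \<ge> 3"
proof (cases ts)
  case (Cons t ts')
  have "Suc (val t) \<ge> 2" using val_pos[of t] by simp
  then have "Suc (val t) * F ts' \<ge> 2 * 1" using F_pos[of ts'] by (rule mult_le_mono)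
  then have "F ts \<ge> 2" using Cons by simp
  moreover have "SS ts \<ge> 1" using val_pos[of t] Cons by simp
  ultimately show ?thesis by simp
qed simp

lemma mono_val: assumes "val t' < val t"
  shows "val (Node (xs @ t' # ys)) < val (Node (xs @ t # ys))"
proof -
  have "F xs * Suc (val t') * F ys \<le> F xs * Suc (val t) * F ys"
    using assms by (intro mult_le_mono) auto
  moreover have "val (Node (xs @ t' # ys)) = F xs * Suc (val t') * F ys + (SS xs + val t' + SS ys)" by (simp add: algebra_simps)
  moreover have "val (Node (xs @ t # ys)) = F xs * Suc (val t) * F ys + (SS xs + val t + SS ys)" by (simp add: algebra_simps)
  ultimately show ?thesis using assms by linarith
qed

lemma sz_upd: "sz t' = sz t \<Longrightarrow> sz (Node (xs @ t' # ys)) = sz (Node (xs @ t # ys))"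
  by simp

lemma fix1: "sub T p = Some (Node [S]) \<Longrightarrow> p \<noteq> [] \<Longrightarrow> \<exists>T'. sz T' = sz T \<and> val T' < val T"
proof (induction T arbitrary: p)
  case (Node ts)
  then obtain i q where p: "p = i # q" by (cases p) auto
  with Node.prems have i: "i < length ts" and q: "sub (ts!i) q = Some (Node [S])"
    by (auto split: if_splits)
  define xs where "xs = take i ts"
  define ys where "ys = drop (Suc i) ts"
  have ts: "ts = xs @ ts!i # ys" unfolding xs_def ys_def by (rule id_take_nth_drop[OF i])
  show ?case
  proof (cases "q = []")
    case True
    then have ti: "ts!i = Node [S]" using q by simp
    let ?T = "Node (S # xs @ Node [] # ys)"
    have eqT: "Node ts = Node (xs @ Node [S] # ys)" using arg_cong[OF ts, of Node] unfolding ti .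
    have "sz ?T = sz (Node ts)" unfolding eqT by simp
    moreover have "val ?T < val (Node ts)"
    proof -
      have e: "F (S # xs @ Node [] # ys) = F (xs @ Node [S] # ys)" by (simp add: algebra_simps)
      show ?thesis using val_pos[of S] unfolding eqT by (simp add: e[simplified])
    qed
    ultimately show ?thesis by blast
  next
    case False
    from Node.IH[OF nth_mem[OF i] q False] obtain t' where t': "sz t' = sz (ts!i)" "val t' < val (ts!i)" by blast
    have eqT: "Node ts = Node (xs @ ts!i # ys)" by (rule arg_cong[OF ts])
    have "sz (Node (xs @ t' # ys)) = sz (Node ts)" using t' unfolding eqT by simp
    moreover have "val (Node (xs @ t' # ys)) < val (Node ts)" using mono_val[OF t'(2)] unfolding eqT .
    ultimately show ?thesis by blast
  qed
qed

lemma part1: assumes "minimal T" "p \<in> verts T" "p \<noteq> []"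
  shows "nchildren T p = 0 \<or> nchildren T p \<ge> 2"
proof (rule ccontr)
  assume "\<not> ?thesis"
  then have n1: "nchildren T p = 1" by auto
  from assms(2) obtain s where s: "sub T p = Some s" by (auto simp: verts_def)
  obtain us where "s = Node us" by (cases s)
  with n1 s obtain S where "s = Node [S]" by (cases us) (auto simp: nchildren_def)
  with fix1 s assms(3) obtain T' where "sz T' = sz T" "val T' < val T" by metis
  with minimal_le[OF assms(1)] show False by fastforce
qed



lemma F_mset: assumes "mset ts = mset ts'" shows "F ts = F ts'"
proof -
  have "F ts = prod_mset (mset (map (\<lambda>t. Suc (val t)) ts))" by (rule prod_mset_prod_list[symmetric])
  also have "\<dots> = prod_mset (mset (map (\<lambda>t. Suc (val t)) ts'))" by (simp only: mset_map assms)
  also have "\<dots> = F ts'" by (rule prod_mset_prod_list)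
  finally show ?thesis .
qed
lemma SS_mset: assumes "mset ts = mset ts'" shows "SS ts = SS ts'"
proof -
  have "SS ts = sum_mset (mset (map val ts))" by (rule sum_mset_sum_list[symmetric])
  also have "\<dots> = sum_mset (mset (map val ts'))" by (simp only: mset_map assms)
  also have "\<dots> = SS ts'" by (rule sum_mset_sum_list)
  finally show ?thesis .
qed
lemma szs_mset: assumes "mset ts = mset ts'" shows "sum_list (map sz ts) = sum_list (map sz ts')"
proof -
  have "sum_list (map sz ts) = sum_mset (mset (map sz ts))" by (rule sum_mset_sum_list[symmetric])
  also have "\<dots> = sum_mset (mset (map sz ts'))" by (simp only: mset_map assms)
  also have "\<dots> = sum_list (map sz ts')" by (rule sum_mset_sum_list)
  finally show ?thesis .
qed
lemma val_mset: "mset ts = mset ts' \<Longrightarrow> val (Node ts) = val (Node ts')"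
  using F_mset[of ts ts'] SS_mset[of ts ts'] by simp
lemma sz_mset: "mset ts = mset ts' \<Longrightarrow> sz (Node ts) = sz (Node ts')"
  using szs_mset[of ts ts'] by simp

lemma arith_move:
  fixes u Pc Sc b :: nat
  assumes "Pc < u" "Sc \<ge> 1" "b \<ge> 1"
  shows "u * (Suc (Pc * Suc b + (Sc + b))) + (Pc * Suc b + Sc + b) < u * (Suc (Pc + Sc) * Suc b) + (Pc + Sc + b)"
proof -
  have "Pc * b < u * Sc * b"
  proof -
    have "Pc < u * Sc" using assms by (metis less_le_trans mult_le_mono2 mult_1_right)
    then show ?thesis using assms(3) by simp
  qed
  then show ?thesis by (simp add: algebra_simps)
qed

lemma L_move:
  assumes "cs \<noteq> []" "val (Node cs) \<le> val x"
  shows "val (Node (x # Node (cs @ [b]) # rest)) < val (Node (x # Node cs # b # rest))"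
proof -
  let ?u = "Suc (val x) * F rest"
  have Sc: "SS cs \<ge> 1"
  proof (cases cs)
    case (Cons a l) have "1 \<le> val a" by (rule val_pos) then show ?thesis using Cons by simp
  qed (use assms in simp)
  have "F cs < Suc (val x)" using assms(2) by simp
  also have "\<dots> \<le> ?u" using mult_le_mono2[OF F_pos[of rest], of "Suc (val x)"] by simp
  finally have "F cs < ?u" .
  from arith_move[OF this Sc val_pos[of b]]
  show ?thesis by (simp add: algebra_simps)
qed

lemma sz_move: "sz (Node (x # Node (cs @ [b]) # rest)) = sz (Node (x # Node cs # b # rest))"
  by simp

abbreviation leaf where "leaf \<equiv> Node []"
abbreviation cherry where "cherry \<equiv> Node [leaf, leaf]"

lemma L_three: assumes "F rest \<ge> 4"
  shows "val (Node (cherry # rest)) < val (Node (leaf # leaf # leaf # rest))"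
  using assms by simp

lemma L_k1: assumes "us \<noteq> []"
  shows "val (Node (leaf # us)) < val (Node [Node us])"
proof -
  have "SS us \<ge> 1"
  proof (cases us)
    case (Cons a l) have "1 \<le> val a" by (rule val_pos) then show ?thesis using Cons by simp
  qed (use assms in simp)
  then show ?thesis by simp
qed

lemma L_B2: assumes "val y \<ge> 3"
  shows "val (Node [Node (ys @ [leaf, leaf]), y]) < val (Node [Node (y # ys), leaf, leaf])"
proof -
  have "F ys \<ge> Suc (SS ys)" by (rule F_ge_S)
  then obtain d where d: "F ys = Suc (SS ys) + d" using le_Suc_ex by blast
  obtain e where e: "val y = 3 + e" using assms le_Suc_ex by (metis add.commute le_add_diff_inverse)
  show ?thesis by (simp add: d e algebra_simps)
qed

lemma star4: "val (Node [cherry, Node [leaf,leaf,leaf]]) < val (Node [Node [leaf,leaf,leaf,leaf], leaf, leaf])"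
  by simp

lemma L_starN: assumes "length ls \<ge> 2" "\<forall>t\<in>set ls. t = leaf"
  shows "val (Node [Node (cherry # ls), leaf, leaf]) < val (Node [Node (leaf # leaf # leaf # ls), leaf, leaf])"
proof -
  have "F ls = 2 ^ length ls" using assms(2) by (induction ls) auto
  then have "F ls \<ge> 4"
  proof -
    have "(2::nat)^2 \<le> 2 ^ length ls" by (rule power_increasing) (use assms(1) in auto)
    then show ?thesis using \<open>F ls = 2 ^ length ls\<close> by simp
  qed
  have "val (Node (cherry # ls)) < val (Node (leaf # leaf # leaf # ls))" by (rule L_three) fact
  from mono_val[OF this, of "[]" "[leaf, leaf]"] show ?thesis by simp
qed

lemma notmin: "minimal T \<Longrightarrow> sz T' = sz T \<Longrightarrow> val T' < val T \<Longrightarrow> False"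
  using minimal_le[of T T'] by simp

lemma leaves_sz: "\<forall>t\<in>set ls. t = leaf \<Longrightarrow> sum_list (map sz ls) = length ls"
  by (induction ls) auto
lemma leaves_F: "\<forall>t\<in>set ls. t = leaf \<Longrightarrow> F ls = 2 ^ length ls"
  by (induction ls) auto

lemma F_ge4: "length ls \<ge> 2 \<Longrightarrow> \<forall>t\<in>set ls. t = leaf \<Longrightarrow> F ls \<ge> 4"
proof -
  assume a: "length ls \<ge> 2" "\<forall>t\<in>set ls. t = leaf"
  have "(2::nat)^2 \<le> 2 ^ length ls" by (rule power_increasing) (use a(1) in auto)
  then show ?thesis using leaves_F[OF a(2)] by simp
qed

lemma nonleaf_val: "t \<noteq> leaf \<Longrightarrow> val t \<ge> 3"
proof (cases t)
  case (Node us)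
  assume "t \<noteq> leaf"
  then have "us \<noteq> []" using Node by simp
  from val_nonleaf[OF this] show ?thesis using Node by simp
qed

lemma part2: assumes min: "minimal T" and n8: "sz T \<ge> 8" shows "nchildren T [] = 2"
proof (rule ccontr)
  assume ne: "nchildren T [] \<noteq> 2"
  obtain ts where T: "T = Node ts" by (cases T)
  have len: "length ts \<noteq> 2" using ne T by (simp add: nchildren_def)
  have imp: "False" if m: "mset ts = mset ts'" and s: "sz T' = sz (Node ts')" and v: "val T' < val (Node ts')" for ts' T'
  proof -
    have "sz T' = sz T" using s sz_mset[OF m] T by simp
    moreover have "val T' < val T" using v val_mset[OF m] T by simp
    ultimately show False by (rule notmin[OF min])
  qed
  define ls where "ls = filter (\<lambda>t. t = leaf) ts"
  define nl where "nl = filter (\<lambda>t. t \<noteq> leaf) ts"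
  have ms: "mset ts = mset (nl @ ls)"
    unfolding ls_def nl_def by (simp add: multiset_partition[symmetric] add.commute)
  have lsl: "\<forall>t\<in>set ls. t = leaf" by (simp add: ls_def)
  have nll: "\<forall>t\<in>set nl. t \<noteq> leaf" by (simp add: nl_def)
  have lens: "length ts = length nl + length ls" using arg_cong[OF ms, of size] by simp
  consider (z) "ts = []" | (one) t where "ts = [t]" | (many) "length ts \<ge> 3"
  proof (cases ts)
    case (Cons a l)
    show ?thesis
    proof (cases l)
      case Nil then show ?thesis using Cons that by simp
    next
      case (Cons b l')
      then show ?thesis using \<open>ts = a # l\<close> len that by (cases l') auto
    qed
  qed (use that in auto)
  then show False
  proof cases
    case z then show False using n8 T by simp
  next
    case (one t)
    obtain us where t: "t = Node us" by (cases t)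
    show False
    proof (cases us)
      case Nil then show False using n8 T one t by simp
    next
      case (Cons u us')
      then have "us \<noteq> []" by simp
      from L_k1[OF this] have v: "val (Node (leaf # us)) < val (Node [Node us])" .
      have s: "sz (Node (leaf # us)) = sz (Node [Node us])" by simp
      have m: "mset ts = mset [Node us]" using one t by simp
      show False by (rule imp[OF m s v])
    qed
  next
    case many
    show False
    proof (cases nl)
      case Nil
      then have "length ls \<ge> 7" using lens n8 T leaves_sz[OF lsl] ms szs_mset[OF ms] Nil by simp
      then obtain rest where ls: "ls = leaf # leaf # leaf # rest" using lsl
        by (cases ls; cases "tl ls"; cases "tl (tl ls)") auto
      have rl: "\<forall>t\<in>set rest. t = leaf" "length rest \<ge> 2" using lsl ls \<open>length ls \<ge> 7\<close> by auto
      have "val (Node (cherry # rest)) < val (Node (leaf # leaf # leaf # rest))"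
        by (rule L_three) (rule F_ge4[OF rl(2) rl(1)])
      then show False using imp[of ls "Node (cherry # rest)"] ms Nil ls by simp
    next
      case (Cons x nl')
      show False
      proof (cases nl')
        case (Cons y zs)
        have "length (zs @ ls) \<ge> 1" using lens many \<open>nl = x # nl'\<close> Cons by simp
        then obtain b rest where br: "zs @ ls = b # rest" by (cases "zs @ ls") auto
        have nlr: "nl @ ls = x # y # b # rest" using \<open>nl = x # nl'\<close> Cons br by simp
        have xl: "x \<noteq> leaf" and yl: "y \<noteq> leaf" using nll \<open>nl = x # nl'\<close> Cons by auto
        show False
        proof (cases "val y \<le> val x")
          case True
          obtain cs where y: "y = Node cs" by (cases y)
          have "cs \<noteq> []" using yl y by simp
          from L_move[OF this, of x b rest] True y
          have "val (Node (x # Node (cs @ [b]) # rest)) < val (Node (x # y # b # rest))" by simp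
          then show False using imp[of "x # y # b # rest" "Node (x # Node (cs @ [b]) # rest)"] ms nlr y by simp
        next
          case False
          obtain cs where x: "x = Node cs" by (cases x)
          have "cs \<noteq> []" using xl x by simp
          from L_move[OF this, of y b rest] False x
          have "val (Node (y # Node (cs @ [b]) # rest)) < val (Node (y # x # b # rest))" by simp
          moreover have "mset ts = mset (y # x # b # rest)" using ms nlr by simp
          ultimately show False using imp[of "y # x # b # rest" "Node (y # Node (cs @ [b]) # rest)"] x by simp
        qed
      next
        case Nil
        have nlx: "nl = [x]" using Nil \<open>nl = x # nl'\<close> by simp
        have xl: "x \<noteq> leaf" using nll nlx by auto
        have "length ls \<ge> 2" using lens many nlx by simp
        then obtain ls' where ls: "ls = leaf # leaf # ls'" using lsl
          by (cases ls; cases "tl ls") auto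
        show False
        proof (cases ls')
          case (Cons l3 ls'')
          have l3: "l3 = leaf" and l'': "\<forall>t\<in>set ls''. t = leaf" using lsl ls Cons by auto
          have "F (x # ls'') \<ge> 4"
          proof -
            have "Suc (val x) * 1 \<le> Suc (val x) * F ls''" by (rule mult_le_mono2) (rule F_pos)
            then show ?thesis using nonleaf_val[OF xl] by simp
          qed
          then have "val (Node (cherry # x # ls'')) < val (Node (leaf # leaf # leaf # x # ls''))" by (rule L_three)
          moreover have "mset ts = mset (leaf # leaf # leaf # x # ls'')" using ms nlx ls Cons l3 by simp
          ultimately show False using imp[of "leaf # leaf # leaf # x # ls''" "Node (cherry # x # ls'')"] by simp
        next
          case Nil
          have mts: "mset ts = mset [x, leaf, leaf]" using ms nlx ls Nil by simp
          obtain ys where x: "x = Node ys" by (cases x)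
          have szx: "sz x \<ge> 5" using n8 T szs_mset[OF mts] by simp
          show False
          proof (cases "\<exists>y\<in>set ys. y \<noteq> leaf")
            case True
            then obtain y where y: "y \<in> set ys" "y \<noteq> leaf" by blast
            define ys' where "ys' = remove1 y ys"
            have my: "mset ys = mset (y # ys')" using y(1) by (simp add: ys'_def)
            have vx: "val x = val (Node (y # ys'))" and sx: "sz x = sz (Node (y # ys'))"
              using val_mset[OF my] sz_mset[OF my] x by auto
            have "val (Node [Node (ys' @ [leaf, leaf]), y]) < val (Node [Node (y # ys'), leaf, leaf])"
              by (rule L_B2) (rule nonleaf_val[OF y(2)])
            then have "val (Node [Node (ys' @ [leaf, leaf]), y]) < val (Node [x, leaf, leaf])" using vx by simp
            moreover have "sz (Node [Node (ys' @ [leaf, leaf]), y]) = sz (Node [x, leaf, leaf])" using sx by simp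
            ultimately show False using imp[OF mts] by blast
          next
            case False
            then have yl: "\<forall>t\<in>set ys. t = leaf" by blast
            have "length ys \<ge> 4" using szx x leaves_sz[OF yl] by simp
            then obtain ls2 where ys: "ys = leaf # leaf # leaf # ls2" using yl
              by (cases ys; cases "tl ys"; cases "tl (tl ys)") auto
            have l2: "\<forall>t\<in>set ls2. t = leaf" using yl ys by auto
            have "length ls2 \<ge> 1" using \<open>length ys \<ge> 4\<close> ys by simp
            show False
            proof (cases "length ls2 \<ge> 2")
              case True
              from L_starN[OF True l2]
              have "val (Node [Node (cherry # ls2), leaf, leaf]) < val (Node [x, leaf, leaf])" using x ys by simp
              moreover have "sz (Node [Node (cherry # ls2), leaf, leaf]) = sz (Node [x, leaf, leaf])" using x ys by simp
              ultimately show False using imp[OF mts] by blast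
            next
              case False
              then have "ls2 = [leaf]" using \<open>length ls2 \<ge> 1\<close> l2 by (cases ls2) (auto simp: Suc_le_eq)
              then have "x = Node [leaf,leaf,leaf,leaf]" using x ys by simp
              then show False using star4 imp[OF mts, of "Node [cherry, Node [leaf,leaf,leaf]]"] by simp
            qed
          qed
        qed
      qed
    qed
  qed
qed


theorem lemma3p1:
  fixes T :: rtree and n :: nat
  assumes "minimal T" and "order T = n"
  shows "(\<forall>p\<in>verts T. p \<noteq> [] \<longrightarrow> nchildren T p = 0 \<or> nchildren T p \<ge> 2)
         \<and> (n \<ge> 8 \<longrightarrow> nchildren T [] = 2)"
  using part1[OF assms(1)] part2[OF assms(1)] assms(2) by (auto simp: order_sz)

end
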